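(* Let $(\Gamma,c)$ be a real congruence group with $c=c_0$ (where $c_0(x+iy)=-x+iy$) and such that $\Gamma$ is contained in (the image in $\mathrm{PSL}_2(\mathbf{Z})$ of) $\Gamma_0(N)$ for some $N>2$. Then $X_\Gamma$ has no real elliptic point of even order.
   Context: $\mathfrak{h}$ is the upper half-plane. For a complex conjugation $c$ (anti-holomorphic involution of $\mathfrak h$) and $\gamma\in\mathrm{PSL}_2(\mathbf{R})$, $\gamma^c$ denotes $c\gamma c$. A real congruence group is a pair $(\Gamma,c)$ where $\Gamma\subseteq\mathrm{PSL}_2(\mathbf{Z})$, $c$ is a complex conjugation with $\Gamma^c=\Gamma$, and for some $N\ge1$, $\Gamma$ contains $\Gamma(N)$ (image of matrices $\equiv I\bmod N$) and $\Gamma(N)^c=\Gamma(N)$. $X_\Gamma=\mathfrak{h}^*/\Gamma$ with $\mathfrak h^*=\mathfrak h\cup\mathbf{Q}\mathbf{P}^1$, and $c$ descends to an involution of $X_\Gamma$; a real point is a fixed point. An elliptic point of even order is a point of $\mathfrak{h}$ whose stabilizer in $\Gamma$ has even order. $\Gamma_0(N)$ consists of matrices in $\mathrm{SL}_2(\mathbf{Z})$ with lower-left entry divisible by $N$. *)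

theory Defs
  imports Complex_Main "HOL-Algebra.Group"
begin

text \<open>Integer 2x2 matrices (a,b,c,d) standing for [[a,b],[c,d]].\<close>
type_synonym mat2 = "int \<times> int \<times> int \<times> int"

definition sl2z :: "mat2 set" where
  "sl2z = {(a,b,c,d). a*d - b*c = 1}"

fun mmul :: "mat2 \<Rightarrow> mat2 \<Rightarrow> mat2" where
  "mmul (a,b,c,d) (a',b',c',d') = (a*a' + b*c', a*b' + b*d', c*a' + d*c', c*b' + d*d')"

fun mneg :: "mat2 \<Rightarrow> mat2" where
  "mneg (a,b,c,d) = (-a,-b,-c,-d)"

definition pclass :: "mat2 \<Rightarrow> mat2 set" where
  "pclass M = {M, mneg M}"

definition psl2z :: "mat2 set set" where
  "psl2z = pclass ` sl2z"

definition pmul :: "mat2 set \<Rightarrow> mat2 set \<Rightarrow> mat2 set" where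
  "pmul X Y = {mmul A B | A B. A \<in> X \<and> B \<in> Y}"

definition PSL2Z :: "mat2 set monoid" where
  "PSL2Z = \<lparr>carrier = psl2z, mult = pmul, one = pclass (1,0,0,1)\<rparr>"

definition Gamma_princ :: "nat \<Rightarrow> mat2 set set" where
  "Gamma_princ N = pclass ` {(a,b,c,d) \<in> sl2z.
      int N dvd (a - 1) \<and> int N dvd b \<and> int N dvd c \<and> int N dvd (d - 1)}"

definition Gamma0 :: "nat \<Rightarrow> mat2 set set" where
  "Gamma0 N = pclass ` {(a,b,c,d) \<in> sl2z. int N dvd c}"

definition uhp :: "complex set" where
  "uhp = {z. Im z > 0}"

fun moeb :: "mat2 \<Rightarrow> complex \<Rightarrow> complex" where
  "moeb (a,b,c,d) z = (of_int a * z + of_int b) / (of_int c * z + of_int d)"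

definition act :: "mat2 set \<Rightarrow> complex \<Rightarrow> complex" where
  "act X z = moeb (SOME M. M \<in> X) z"

definition c0 :: "complex \<Rightarrow> complex" where
  "c0 z = - cnj z"

definition c0_stable :: "mat2 set set \<Rightarrow> bool" where
  "c0_stable S \<longleftrightarrow>
     {(\<lambda>z\<in>uhp. c0 (act g (c0 z))) | g. g \<in> S} = {(\<lambda>z\<in>uhp. act g z) | g. g \<in> S}"

definition real_congruence_group_c0 :: "mat2 set set \<Rightarrow> bool" where
  "real_congruence_group_c0 G \<longleftrightarrow>
     subgroup G PSL2Z \<and> c0_stable G \<and>
     (\<exists>N::nat. N \<ge> 1 \<and> Gamma_princ N \<subseteq> G \<and> c0_stable (Gamma_princ N))"

definition stab :: "mat2 set set \<Rightarrow> complex \<Rightarrow> mat2 set set" where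
  "stab G z = {g \<in> G. act g z = z}"

definition elliptic_even :: "mat2 set set \<Rightarrow> complex \<Rightarrow> bool" where
  "elliptic_even G z \<longleftrightarrow> z \<in> uhp \<and> finite (stab G z) \<and> even (card (stab G z))"

text \<open>The point of X_Gamma represented by z is the orbit of z.\<close>
definition orbit :: "mat2 set set \<Rightarrow> complex \<Rightarrow> complex set" where
  "orbit G z = {act g z | g. g \<in> G}"

text \<open>A point of X_Gamma (represented by z in the upper half-plane) is real iff it is
  fixed by the involution induced by c_0.\<close>
definition real_point_c0 :: "mat2 set set \<Rightarrow> complex \<Rightarrow> bool" where
  "real_point_c0 G z \<longleftrightarrow> orbit G (c0 z) = orbit G z"

end

theory Submission
  imports Defs
begin

lemma moeb_neg: "moeb (mneg M) z = moeb M z"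
proof (cases M)
  case (fields a b c d)
  have e1: "- (of_int a * z) - of_int b = - (of_int a * z + of_int b)" for a b :: int
    by simp
  have "(- (of_int a * z) - of_int b) / (- (of_int c * z) - of_int d)
        = (of_int a * z + of_int b) / (of_int c * z + of_int d)"
    unfolding e1 by (rule minus_divide_divide)
  then show ?thesis by (simp add: fields)
qed

lemma act_pclass: "act (pclass M) z = moeb M z"
proof -
  have "(SOME M'. M' \<in> pclass M) \<in> pclass M" by (rule someI[of _ M]) (simp add: pclass_def)
  then have "(SOME M'. M' \<in> pclass M) = M \<or> (SOME M'. M' \<in> pclass M) = mneg M"
    by (simp add: pclass_def)
  then show ?thesis unfolding act_def by (metis moeb_neg)
qed

lemma mneg_mneg[simp]: "mneg (mneg X) = X"
  by (cases X) simp

lemma mneg_eq_iff: "mneg X = Y \<longleftrightarrow> X = mneg Y"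
  by (metis mneg_mneg)

lemma mmul_neg1: "mmul (mneg A) B = mneg (mmul A B)"
  by (cases A, cases B) (simp add: algebra_simps)

lemma mmul_neg2: "mmul A (mneg B) = mneg (mmul A B)"
  by (cases A, cases B) (simp add: algebra_simps)

lemma pclass_eq: "pclass A = pclass B \<longleftrightarrow> B = A \<or> B = mneg A"
  apply (cases A, cases B)
  by (auto simp: pclass_def doubleton_eq_iff)

lemma pmul_pclass: "pmul (pclass A) (pclass B) = pclass (mmul A B)"
proof -
  have "pmul (pclass A) (pclass B) = {mmul A B, mmul A (mneg B), mmul (mneg A) B, mmul (mneg A) (mneg B)}"
    unfolding pmul_def pclass_def by blast
  then show ?thesis by (simp add: mmul_neg1 mmul_neg2 pclass_def del: mmul.simps mneg.simps) blast
qed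

definition iota :: "mat2 set \<Rightarrow> mat2 set" where
  "iota X = (\<lambda>(a,b,c,d). (d,-b,-c,a)) ` X"

lemma iota_pclass: "iota (pclass (a,b,c,d)) = pclass (d,-b,-c,a)"
  by (auto simp: iota_def pclass_def)

lemma inv_psl:
  assumes "a*d - b*c = 1"
  shows "inv\<^bsub>PSL2Z\<^esub> (pclass (a,b,c,d)) = pclass (d,-b,-c,a)"
  unfolding m_inv_def
proof (rule the_equality)
  have s: "(d,-b,-c,a) \<in> sl2z" using assms by (simp add: sl2z_def algebra_simps)
  show "pclass (d,-b,-c,a) \<in> carrier PSL2Z \<and>
    pclass (a, b, c, d) \<otimes>\<^bsub>PSL2Z\<^esub> pclass (d,-b,-c,a) = \<one>\<^bsub>PSL2Z\<^esub> \<and>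
    pclass (d,-b,-c,a) \<otimes>\<^bsub>PSL2Z\<^esub> pclass (a, b, c, d) = \<one>\<^bsub>PSL2Z\<^esub>"
    using s assms by (simp add: PSL2Z_def psl2z_def pmul_pclass algebra_simps)
next
  fix y assume y: "y \<in> carrier PSL2Z \<and>
    pclass (a, b, c, d) \<otimes>\<^bsub>PSL2Z\<^esub> y = \<one>\<^bsub>PSL2Z\<^esub> \<and>
    y \<otimes>\<^bsub>PSL2Z\<^esub> pclass (a, b, c, d) = \<one>\<^bsub>PSL2Z\<^esub>"
  then obtain B where B: "y = pclass B" by (auto simp: PSL2Z_def psl2z_def)
  obtain e f g h where Bq: "B = (e,f,g,h)" by (cases B)
  have "pclass (mmul (a,b,c,d) B) = pclass (1,0,0,1)"
    using y B by (simp add: PSL2Z_def pmul_pclass)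
  then have "(1,0,0,1) = mmul (a,b,c,d) B \<or> (1,0,0,1) = mneg (mmul (a,b,c,d) B)"
    unfolding pclass_eq by blast
  then have "mmul (a,b,c,d) B = (1,0,0,1) \<or> mmul (a,b,c,d) B = mneg (1,0,0,1)"
    by (metis mneg_mneg)
  then have "mmul (a,b,c,d) B = (1,0,0,1) \<or> mmul (a,b,c,d) B = (-1,0,0,-1)"
    by simp
  then have eqs: "(a*e+b*g = 1 \<and> a*f+b*h = 0 \<and> c*e+d*g = 0 \<and> c*f+d*h = 1) \<or>
      (a*e+b*g = -1 \<and> a*f+b*h = 0 \<and> c*e+d*g = 0 \<and> c*f+d*h = -1)"
    by (simp add: Bq)
  have k1: "e = d*(a*e+b*g) - b*(c*e+d*g)"
  proof -
    have "e*(a*d-b*c) = d*(a*e+b*g) - b*(c*e+d*g)" by (simp add: algebra_simps)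
    then show ?thesis using assms by simp
  qed
  have k2: "f = d*(a*f+b*h) - b*(c*f+d*h)"
  proof -
    have "f*(a*d-b*c) = d*(a*f+b*h) - b*(c*f+d*h)" by (simp add: algebra_simps)
    then show ?thesis using assms by simp
  qed
  have k3: "g = a*(c*e+d*g) - c*(a*e+b*g)"
  proof -
    have "g*(a*d-b*c) = a*(c*e+d*g) - c*(a*e+b*g)" by (simp add: algebra_simps)
    then show ?thesis using assms by simp
  qed
  have k4: "h = a*(c*f+d*h) - c*(a*f+b*h)"
  proof -
    have "h*(a*d-b*c) = a*(c*f+d*h) - c*(a*f+b*h)" by (simp add: algebra_simps)
    then show ?thesis using assms by simp
  qed
  from eqs have "B = (d,-b,-c,a) \<or> B = mneg (d,-b,-c,a)"
  proof (elim disjE conjE)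
    assume h1: "a*e+b*g = 1" and h2: "a*f+b*h = 0" and h3: "c*e+d*g = 0" and h4: "c*f+d*h = 1"
    have "e = d" using k1 unfolding h1 h3 by simp
    moreover have "f = -b" using k2 unfolding h2 h4 by simp
    moreover have "g = -c" using k3 unfolding h1 h3 by simp
    moreover have "h = a" using k4 unfolding h2 h4 by simp
    ultimately show ?thesis by (simp add: Bq)
  next
    assume h1: "a*e+b*g = -1" and h2: "a*f+b*h = 0" and h3: "c*e+d*g = 0" and h4: "c*f+d*h = -1"
    have "e = -d" using k1 unfolding h1 h3 by simp
    moreover have "f = b" using k2 unfolding h2 h4 by simp
    moreover have "g = c" using k3 unfolding h1 h3 by simp
    moreover have "h = -a" using k4 unfolding h2 h4 by simp
    ultimately show ?thesis by (simp add: Bq)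
  qed
  then show "y = pclass (d,-b,-c,a)" using B pclass_eq by metis
qed

lemma even_inv_free:
  assumes "finite T" "\<forall>x\<in>T. f x \<in> T \<and> f (f x) = x \<and> f x \<noteq> x"
  shows "even (card T)"
  using assms
proof (induction "card T" arbitrary: T rule: less_induct)
  case less
  show ?case
  proof (cases "T = {}")
    case True then show ?thesis by simp
  next
    case False
    then obtain x where x: "x \<in> T" by auto
    let ?T = "T - {x, f x}"
    have fx: "f x \<in> T" "f x \<noteq> x" using x less.prems by auto
    have sub: "{x, f x} \<subseteq> T" using x fx by simp
    have c2: "card {x, f x} = 2" using fx by simp
    have "card ?T = card T - card {x, f x}"
      using less.prems(1) sub by (simp add: card_Diff_subset)
    moreover have "card {x, f x} \<le> card T" using less.prems(1) sub by (rule card_mono)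
    ultimately have c: "card T = card ?T + 2" using c2 by simp
    have cl: "\<forall>y\<in>?T. f y \<in> ?T \<and> f (f y) = y \<and> f y \<noteq> y"
    proof
      fix y assume y: "y \<in> ?T"
      then have yT: "y \<in> T" and yx: "y \<noteq> x" and yfx: "y \<noteq> f x" by auto
      have p: "f y \<in> T" "f (f y) = y" "f y \<noteq> y" using less.prems(2) yT by auto
      have px: "f (f x) = x" using less.prems(2) x by auto
      have "f y \<noteq> x" using p(2) yfx by auto
      moreover have "f y \<noteq> f x" using p(2) px yx by metis
      ultimately show "f y \<in> ?T \<and> f (f y) = y \<and> f y \<noteq> y" using p by auto
    qed
    have "even (card ?T)"
      by (rule less.hyps) (use c less.prems(1) cl in auto)
    then show ?thesis using c by simp
  qed
qed


lemma core_real: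
  fixes a b c p q r s :: real and x y :: real
  assumes yp: "y > 0" and det1: "-a*a - b*c = 1" and c0: "c \<noteq> 0"
    and E1: "a*x + b = c*(x*x - y*y) - a*x" and E2: "a*y = c*(2*x*y) - a*y"
    and E3: "p*x + q = - r*x*x - s*x - r*y*y" and E4: "p*y = s*y"
  shows "2*p*a + q*c - r*b = 0 \<and> p = s"
proof -
  have ps: "p = s" using E4 yp by simp
  have "2*(a*y) = 2*((c*x)*y)" using E2 by (simp add: algebra_simps)
  then have ax: "a = c*x" using yp by simp
  have h: "2*a*x + b = c*(x*x - y*y)" using E1 by linarith
  have "c*(2*a*x + b) = c*(c*(x*x - y*y))" by (simp only: h)
  then have "2*a*(c*x) + b*c = (c*x)*(c*x) - c*c*y*y" by (simp add: algebra_simps)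
  then have "2*a*a + b*c = a*a - c*c*y*y" by (simp only: ax[symmetric])
  then have cy1: "c*c*y*y = 1" using det1 by linarith
  have "c*c*(p*x + q) = c*c*(- r*x*x - s*x - r*y*y)" using E3 by simp
  then have "2*p*(c*x)*c + q*c*c + r*((c*x)*(c*x) + c*c*y*y) = 0"
    using ps by (simp add: algebra_simps)
  then have "2*p*a*c + q*c*c + r*(a*a + 1) = 0" by (simp only: ax[symmetric] cy1)
  moreover have "a*a + 1 = -b*c" using det1 by linarith
  ultimately have "2*p*a*c + q*c*c + r*(-b*c) = 0" by simp
  moreover have "c*(2*p*a + q*c - r*b) = 2*p*a*c + q*c*c + r*(-b*c)" by (simp add: algebra_simps)
  ultimately have "c*(2*p*a + q*c - r*b) = 0" by simp
  then show ?thesis using c0 ps by simp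
qed

lemma core:
  fixes a b c p q r s :: int and z :: complex
  assumes y0: "Im z > 0" and det1: "-a*a - b*c = 1" and det2: "p*s - q*r = 1"
    and f1: "moeb (a,b,c,-a) z = z" and f2: "moeb (p,q,r,s) z = - cnj z"
  shows "2*p*a + q*c - r*b = 0 \<and> p = s"
proof -
  obtain x y where z: "z = Complex x y" by (cases z)
  have yp: "y > 0" using y0 z by simp
  have c0: "c \<noteq> 0"
  proof
    assume "c = 0" then have "-a*a = 1" using det1 by simp
    moreover have "a*a \<ge> 0" by simp
    ultimately show False by linarith
  qed
  have d1: "of_int c * z + of_int (-a) \<noteq> 0"
  proof
    assume "of_int c * z + of_int (-a) = 0"
    then have "Im (of_int c * z + of_int (-a)) = 0" by simp
    then have "of_int c * y = 0" using z by simp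
    then show False using c0 yp by simp
  qed
  have d2: "of_int r * z + of_int s \<noteq> 0"
  proof
    assume h: "of_int r * z + of_int s = 0"
    then have "Im (of_int r * z + of_int s) = 0" by simp
    then have "of_int r * y = 0" using z by simp
    then have r0: "r = 0" using yp by simp
    then have "s \<noteq> 0" using det2 by auto
    then show False using h r0 by simp
  qed
  have e1: "of_int a * Complex x y + of_int b = Complex x y * (of_int c * Complex x y + of_int (-a))"
    using f1 d1 z by (simp add: divide_eq_eq)
  have e2: "of_int p * Complex x y + of_int q = - cnj (Complex x y) * (of_int r * Complex x y + of_int s)"
    using f2 d2 z by (simp add: divide_eq_eq)
  from e1 have E12: "a*x + b = c*(x*x - y*y) - a*x \<and> a*y = c*(2*x*y) - a*y"
    by (simp add: complex_eq_iff algebra_simps)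
  from e2 have E34: "p*x + q = - (of_int r::real)*x*x - s*x - r*y*y \<and> p*y = s*y"
    by (simp add: complex_eq_iff algebra_simps)
  have det1': "- real_of_int a * real_of_int a - real_of_int b * real_of_int c = 1"
    using det1 by (metis of_int_1 of_int_diff of_int_minus of_int_mult)
  have "2*real_of_int p*real_of_int a + real_of_int q*real_of_int c - real_of_int r*real_of_int b = 0 \<and> real_of_int p = real_of_int s"
    by (rule core_real[OF yp det1' _ conjunct1[OF E12] conjunct2[OF E12] conjunct1[OF E34] conjunct2[OF E34]])
       (use c0 in simp)
  then have A: "2*real_of_int p*real_of_int a + real_of_int q*real_of_int c - real_of_int r*real_of_int b = 0"
    and B: "real_of_int p = real_of_int s" by auto
  have "real_of_int (2*p*a + q*c - r*b) = 0" using A by simp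
  then show ?thesis using B by (simp only: of_int_eq_0_iff of_int_eq_iff)
qed

lemma numth:
  fixes a p q r b c :: int and N :: nat
  assumes "N > 2" "2*p*a + q*c - r*b = 0" "p*p - q*r = 1" "int N dvd r" "int N dvd c"
    "-a*a - b*c = 1"
  shows False
proof -
  have e: "2*p*a = r*b - q*c" using assms(2) by linarith
  have "int N dvd r*b - q*c" using assms(4,5) by (simp add: dvd_diff dvd_mult2 dvd_mult)
  then have "int N dvd 2*p*a" using e by simp
  moreover have "coprime (int N) p"
  proof (rule coprimeI)
    fix d assume d1: "d dvd int N" and d2: "d dvd p"
    have "d dvd r" using d1 assms(4) by (rule dvd_trans)
    then have "d dvd p*p - q*r" using d2 by (simp add: dvd_diff dvd_mult)
    then show "is_unit d" using assms(3) by simp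
  qed
  ultimately have n2a: "int N dvd 2*a"
    by (metis coprime_dvd_mult_right_iff mult.assoc mult.commute)
  have aa: "a*a + 1 = - (b*c)" using assms(6) by linarith
  have "int N dvd b*c" using assms(5) by (rule dvd_mult)
  then have na: "int N dvd a*a + 1" unfolding aa by (simp only: dvd_minus_iff)
  have "int N dvd 4*(a*a+1)" using na by (rule dvd_mult)
  moreover have "int N dvd (2*a)*(2*a)" using n2a by (rule dvd_mult2)
  ultimately have "int N dvd 4*(a*a+1) - (2*a)*(2*a)" by (rule dvd_diff)
  moreover have "4*(a*a+1) - (2*a)*(2*a) = 4" by (simp add: algebra_simps)
  ultimately have "int N dvd int 4" by simp
  then have "N dvd 4" by (simp only: int_dvd_int_iff)
  then have "N \<le> 4" by (simp add: dvd_imp_le)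
  moreover have "N \<noteq> 3" using \<open>N dvd 4\<close> by auto
  ultimately have N34: "N = 3 \<or> N = 4" using assms(1) by linarith
  show False
  proof (cases "N = 3")
    case True
    then obtain k where "2*a = 3*k" using n2a by auto
    then have "a = 3*(a - k)" by (simp add: right_diff_distrib)
    then obtain m where am: "a = 3*m" by blast
    then obtain t where "a*a + 1 = 3*t" using na True by auto
    then have "9*(m*m) + 1 = 3*t" using am by (simp add: algebra_simps)
    then have "1 = 3*(t - 3*(m*m))" by (simp add: algebra_simps)
    then have "(3::int) dvd 1" by (metis dvd_triv_left)
    then show False by simp
  next
    case False
    then have "N = 4" using N34 by simp
    then obtain k where "2*a = 4*k" using n2a by auto
    then have am: "a = 2*k" by simp
    then obtain t where "a*a + 1 = 4*t" using na \<open>N = 4\<close> by auto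
    then have "4*(k*k) + 1 = 4*t" using am by (simp add: algebra_simps)
    then have "1 = 4*(t - k*k)" by (simp add: algebra_simps)
    then have "(4::int) dvd 1" by (metis dvd_triv_left)
    then show False by simp
  qed
qed

lemma moeb_inv_fix:
  fixes a b c d :: int and z :: complex
  assumes det: "a*d - b*c = 1" and y: "Im z > 0" and f: "moeb (a,b,c,d) z = z"
  shows "moeb (d,-b,-c,a) z = z"
proof -
  have d1: "of_int c * z + of_int d \<noteq> 0"
  proof
    assume h: "of_int c * z + of_int d = 0"
    then have "Im (of_int c * z + of_int d) = 0" by simp
    then have "of_int c * Im z = 0" by simp
    then have c0: "c = 0" using y by simp
    then have "d \<noteq> 0" using det by auto
    then show False using h c0 by simp
  qed
  have d2: "of_int (-c) * z + of_int a \<noteq> 0"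
  proof
    assume h: "of_int (-c) * z + of_int a = 0"
    then have "Im (of_int (-c) * z + of_int a) = 0" by simp
    then have "of_int c * Im z = 0" by simp
    then have c0: "c = 0" using y by simp
    then have "a \<noteq> 0" using det by auto
    then show False using h c0 by simp
  qed
  have e: "of_int a * z + of_int b = z * (of_int c * z + of_int d)"
    using f d1 by (simp add: divide_eq_eq)
  have "of_int d * z + of_int (-b) = z * (of_int (-c) * z + of_int a)"
    using e by (simp add: algebra_simps)
  then show ?thesis using d2 by (simp add: divide_eq_eq)
qed

lemma elemG:
  assumes "X \<in> Gamma0 N"
  obtains a b c d where "X = pclass (a,b,c,d)" "a*d - b*c = 1" "int N dvd c"
proof -
  from assms obtain M where M: "M \<in> {(a,b,c,d) \<in> sl2z. int N dvd c}" "X = pclass M"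
    unfolding Gamma0_def by blast
  obtain a b c d where "M = (a,b,c,d)" by (cases M)
  then show ?thesis using that M by (auto simp: sl2z_def)
qed

lemma quad_eq: "(a,b,c,d) = (a',b',c',d') \<Longrightarrow> a = a' \<and> b = b' \<and> c = c' \<and> d = d'"
  by simp

theorem proposition5p11:
  fixes G :: "mat2 set set" and N :: nat
  assumes "real_congruence_group_c0 G"
    and "N > 2" and "G \<subseteq> Gamma0 N"
  shows "\<not> (\<exists>z \<in> uhp. elliptic_even G z \<and> real_point_c0 G z)"
proof
  assume "\<exists>z \<in> uhp. elliptic_even G z \<and> real_point_c0 G z"
  then obtain z where zu: "z \<in> uhp" and ee: "elliptic_even G z" and rp: "real_point_c0 G z" by blast
  have y: "Im z > 0" using zu by (simp add: uhp_def)
  have sg: "subgroup G PSL2Z" using assms(1) by (simp add: real_congruence_group_c0_def)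
  define S where "S = stab G z"
  have fS: "finite S" and eS: "even (card S)" using ee by (simp_all add: elliptic_even_def S_def)
  define one where "one = pclass (1,0,0,1)"
  have oneG: "one \<in> G" using subgroup.one_closed[OF sg] by (simp add: PSL2Z_def one_def)
  have act_one: "act one w = w" for w by (simp add: one_def act_pclass)
  have oneS: "one \<in> S" using oneG act_one by (simp add: S_def stab_def)
  have iS: "iota X \<in> S \<and> iota (iota X) = X" if XS: "X \<in> S" for X
  proof -
    have XG: "X \<in> G" and fx: "act X z = z" using XS by (auto simp: S_def stab_def)
    obtain a b c d where X: "X = pclass (a,b,c,d)" "a*d - b*c = 1" "int N dvd c"
      using elemG XG assms(3) by blast
    have "inv\<^bsub>PSL2Z\<^esub> X \<in> G" using subgroup.m_inv_closed[OF sg XG] .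
    then have "iota X \<in> G" using X inv_psl iota_pclass by simp
    moreover have "act (iota X) z = z"
      using moeb_inv_fix[OF X(2) y] fx X by (simp add: iota_pclass act_pclass)
    moreover have "iota (iota X) = X" using X by (simp add: iota_pclass)
    ultimately show ?thesis by (simp add: S_def stab_def)
  qed
  define F where "F = {X \<in> S. iota X = X}"
  have "even (card (S - F))"
    apply (rule even_inv_free[where f = iota])
    using fS apply simp
  proof
    fix x assume x: "x \<in> S - F"
    then have xS: "x \<in> S" and nx: "iota x \<noteq> x" unfolding F_def by auto
    have i1: "iota x \<in> S" and i2: "iota (iota x) = x" using iS[OF xS] by auto
    have "iota x \<notin> F" unfolding F_def using i2 nx by auto
    then show "iota x \<in> S - F \<and> iota (iota x) = x \<and> iota x \<noteq> x" using i1 i2 nx by blast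
  qed
  moreover have "card S = card F + card (S - F)"
  proof -
    have FS: "F \<subseteq> S" by (auto simp: F_def)
    have "card (S - F) = card S - card F" using fS FS by (simp add: card_Diff_subset finite_subset)
    moreover have "card F \<le> card S" using fS FS by (rule card_mono)
    ultimately show ?thesis by simp
  qed
  ultimately have eF: "even (card F)" using eS by simp
  have "iota one = one" unfolding one_def by (simp add: iota_pclass)
  then have oneF: "one \<in> F" using oneS unfolding F_def by blast
  have "\<exists>X\<in>F. X \<noteq> one"
  proof (rule ccontr)
    assume "\<not> (\<exists>X\<in>F. X \<noteq> one)"
    then have "F = {one}" using oneF by blast
    then have "card F = 1" by simp
    then show False using eF by simp
  qed
  then obtain X where XF: "X \<in> F" and Xne: "X \<noteq> one" by blast
  have XS: "X \<in> S" and iX: "iota X = X" using XF unfolding F_def by auto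
  have XG: "X \<in> G" and fx: "act X z = z" using XS unfolding S_def stab_def by auto
  obtain a b c d where X: "X = pclass (a,b,c,d)" "a*d - b*c = 1" "int N dvd c"
    using elemG XG assms(3) by blast
  have "pclass (d,-b,-c,a) = pclass (a,b,c,d)" using iX unfolding X(1) iota_pclass .
  then have dis: "(a,b,c,d) = (d,-b,-c,a) \<or> (a,b,c,d) = mneg (d,-b,-c,a)"
    by (simp only: pclass_eq)
  have da: "d = -a"
  proof (cases "(a,b,c,d) = (d,-b,-c,a)")
    case True
    then have eqs: "a = d \<and> b = -b \<and> c = -c \<and> d = a" by (rule quad_eq)
    have e2: "b = -b" and e3: "c = -c" and e4: "d = a" using eqs by blast+
    have b0: "b = 0" "c = 0" "d = a" using e2 apply simp using e3 apply simp using e4 .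
    then have "a*a = 1" using X(2) by simp
    then have "a = 1 \<or> a = -1" using zmult_eq_1_iff[of a a] by simp
    then have "X = one"
    proof
      assume "a = 1" then show ?thesis unfolding X(1) b0 one_def by simp
    next
      assume "a = -1"
      then have "(a,b,c,d) = mneg (1,0,0,1)" using b0 by simp
      then have "pclass (1,0,0,1) = pclass (a,b,c,d)" unfolding pclass_eq by blast
      then show ?thesis unfolding X(1) one_def by (rule sym)
    qed
    then show ?thesis using Xne by simp
  next
    case False
    from dis have "(a,b,c,d) = mneg (d,-b,-c,a)"
    proof
      assume "(a,b,c,d) = (d,-b,-c,a)" with False show ?thesis by contradiction
    next
      assume "(a,b,c,d) = mneg (d,-b,-c,a)" then show ?thesis .
    qed
    then have "(a,b,c,d) = (-d, -(-b), -(-c), -a)" by (simp only: mneg.simps)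
    then have "a = -d \<and> b = -(-b) \<and> c = -(-c) \<and> d = -a" by (rule quad_eq)
    then show ?thesis by blast
  qed
  have det1: "-a*a - b*c = 1" using X(2) da by simp
  have f1: "moeb (a,b,c,-a) z = z" using fx X(1) da by (simp add: act_pclass)
  have "\<exists>g. c0 z = act g (c0 z) \<and> g \<in> G" using oneG act_one[of "c0 z"] by metis
  then have "c0 z \<in> orbit G (c0 z)" unfolding orbit_def by simp
  then have "c0 z \<in> orbit G z" using rp by (simp add: real_point_c0_def)
  then obtain h where hG: "h \<in> G" and hz: "act h z = c0 z" by (auto simp: orbit_def)
  obtain p q r s where H: "h = pclass (p,q,r,s)" "p*s - q*r = 1" "int N dvd r"
    using elemG hG assms(3) by blast
  have f2: "moeb (p,q,r,s) z = - cnj z" using hz H(1) by (simp add: act_pclass c0_def)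
  have k: "2*p*a + q*c - r*b = 0 \<and> p = s" by (rule core[OF y det1 H(2) f1 f2])
  show False
    by (rule numth[OF assms(2) conjunct1[OF k] _ H(3) X(3) det1]) (use k H(2) in simp)
qed

end
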